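(* Let $G$ be a ride sharing game (as in the context), let $\vec a$ be a strategy profile and let $i,j$ be players. Suppose (H1) all players have a common set of strategies $\mathcal{A}_0$; (H2) $N\le w$; (H3) the seat allocation is first-fit; (H4) the strategy update $(\vec a,a_j,i)$ is no-vehicle-loss. Then $c_i(a_j,\vec a_{-i})\le c_j(\vec a)$.
   Context: A ride sharing game consists of players $\mathcal{N}=\{1,\ldots,N\}$; vehicles $\mathcal{M}=\{1,\ldots,M\}$ each with seating capacity $w\in\mathbb{N}_{>0}$; times $\mathcal{T}=\{1,\ldots,T\}$; a directed simple graph $\mathcal{G}=(\mathcal{V},\mathcal{E})$ where additionally every node has a loop. Strategies are paths $a_i=(v_1,e_1,\ldots,e_{T-1},v_T)$ in $\mathcal{G}$ from a set $\mathcal{A}_i$, edge $e_t$ traversed in period $(t,t+1)$; $\vec a$ is a profile and $(b_i,\vec a_{-i})$ the profile where $i$ switches to $b_i$; this switch is called the strategy update $(\vec a,b_i,i)$. An allocation map $\mu(i,t,\vec a)\in\mathcal{M}\cup\{\emptyset\}$ assigns players to vehicles; vehicles move with their players; $s_m(t,\vec a)$ is the number of players in vehicle $m$ during $(t,t+1)$ (taken to be $0$ for a player with no vehicle). $N_{et}(\vec a)$, $M_{et}(\vec a)$ are the numbers of players and vehicles on edge $e$ during $(t,t+1)$. Costs: $c_e(w,s)\ge0$ is monotone decreasing in $s$ for $s<w$ and monotone increasing for $s\ge w$; $c_i(\vec a)=\sum_{e_t\in a_i}c_e(w,s_{\mu(i,t,\vec a)}(t,\vec a))$. The allocation consists of a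 path allocation (which edges vehicles move on) and a seat allocation (assigning players on an edge to the vehicles there); the seat allocation is first-fit if players on an edge are put into the vehicle with smallest index there until it is full, then the next, etc. A strategy update $(\vec a,b_i,i)$ is no-vehicle-loss if $M_{et}(b_i,\vec a_{-i})\neq0$ for every $e_t\in b_i$ with $M_{et}(\vec a)>0$. *)

theory Defs
  imports Complex_Main
begin

text \<open>Players are 1..N, vehicles are 1..M, times are 1..T.  A strategy (path)
  is the list of visited vertices [v_1,...,v_T]; the edge e_t traversed during
  the period (t,t+1), t in 1..T-1, is (v_t, v_(t+1)).  Edges are pairs of
  vertices (directed simple graph given by an edge relation, with all loops).
  A profile assigns a path to every player; the path allocation 'vp a m' is the
  path of vehicle m under profile a; the allocation map 'mu i t a' gives the
  vehicle of player i in period (t,t+1) under profile a (None = no vehicle).\<close>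

type_synonym 'v profile = "nat \<Rightarrow> 'v list"

definition players :: "nat \<Rightarrow> nat set" where
  "players N = {1..N}"

definition vehicles :: "nat \<Rightarrow> nat set" where
  "vehicles M = {1..M}"

definition edge_at :: "'v list \<Rightarrow> nat \<Rightarrow> 'v \<times> 'v" where
  "edge_at p t = (p ! (t - 1), p ! t)"

definition is_path :: "'v set \<Rightarrow> ('v \<times> 'v) set \<Rightarrow> nat \<Rightarrow> 'v list \<Rightarrow> bool" where
  "is_path V E T p \<longleftrightarrow> length p = T \<and> set p \<subseteq> V \<and> (\<forall>t\<in>{1..<T}. edge_at p t \<in> E)"

definition feasible :: "nat \<Rightarrow> (nat \<Rightarrow> 'v list set) \<Rightarrow> 'v profile \<Rightarrow> bool" where
  "feasible N A a \<longleftrightarrow> (\<forall>i\<in>players N. a i \<in> A i)"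

definition num_players_on :: "nat \<Rightarrow> 'v profile \<Rightarrow> 'v \<times> 'v \<Rightarrow> nat \<Rightarrow> nat" where
  "num_players_on N a e t = card {k \<in> players N. edge_at (a k) t = e}"

definition num_vehicles_on ::
  "nat \<Rightarrow> ('v profile \<Rightarrow> nat \<Rightarrow> 'v list) \<Rightarrow> 'v profile \<Rightarrow> 'v \<times> 'v \<Rightarrow> nat \<Rightarrow> nat" where
  "num_vehicles_on M vp a e t = card {m \<in> vehicles M. edge_at (vp a m) t = e}"

definition load ::
  "nat \<Rightarrow> (nat \<Rightarrow> nat \<Rightarrow> 'v profile \<Rightarrow> nat option) \<Rightarrow> nat \<Rightarrow> nat \<Rightarrow> 'v profile \<Rightarrow> nat" where
  "load N mu m t a = card {k \<in> players N. mu k t a = Some m}"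

definition seat_load ::
  "nat \<Rightarrow> (nat \<Rightarrow> nat \<Rightarrow> 'v profile \<Rightarrow> nat option) \<Rightarrow> nat \<Rightarrow> nat \<Rightarrow> 'v profile \<Rightarrow> nat" where
  "seat_load N mu i t a = (case mu i t a of None \<Rightarrow> 0 | Some m \<Rightarrow> load N mu m t a)"

definition cost ::
  "nat \<Rightarrow> nat \<Rightarrow> nat \<Rightarrow> ('v \<times> 'v \<Rightarrow> nat \<Rightarrow> nat \<Rightarrow> real)
   \<Rightarrow> (nat \<Rightarrow> nat \<Rightarrow> 'v profile \<Rightarrow> nat option) \<Rightarrow> 'v profile \<Rightarrow> nat \<Rightarrow> real" where
  "cost N T w c mu a i = (\<Sum>t\<in>{1..<T}. c (edge_at (a i) t) w (seat_load N mu i t a))"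

definition ride_sharing_game ::
  "nat \<Rightarrow> nat \<Rightarrow> nat \<Rightarrow> nat \<Rightarrow> 'v set \<Rightarrow> ('v \<times> 'v) set \<Rightarrow> (nat \<Rightarrow> 'v list set)
   \<Rightarrow> ('v \<times> 'v \<Rightarrow> nat \<Rightarrow> nat \<Rightarrow> real) \<Rightarrow> ('v profile \<Rightarrow> nat \<Rightarrow> 'v list)
   \<Rightarrow> (nat \<Rightarrow> nat \<Rightarrow> 'v profile \<Rightarrow> nat option) \<Rightarrow> bool" where
  "ride_sharing_game N M w T V E A c vp mu \<longleftrightarrow>
     0 < w \<and>
     E \<subseteq> V \<times> V \<and> (\<forall>v\<in>V. (v, v) \<in> E) \<and>
     (\<forall>i\<in>players N. A i \<subseteq> {p. is_path V E T p}) \<and>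
     (\<forall>e\<in>E. \<forall>s. 0 \<le> c e w s) \<and>
     (\<forall>e\<in>E. \<forall>s. s < w \<longrightarrow> c e w (Suc s) \<le> c e w s) \<and>
     (\<forall>e\<in>E. \<forall>s. w \<le> s \<longrightarrow> c e w s \<le> c e w (Suc s)) \<and>
     (\<forall>a. feasible N A a \<longrightarrow>
        (\<forall>m\<in>vehicles M. is_path V E T (vp a m)) \<and>
        (\<forall>i\<in>players N. \<forall>t\<in>{1..<T}. \<forall>m. mu i t a = Some m \<longrightarrow>
            m \<in> vehicles M \<and> edge_at (vp a m) t = edge_at (a i) t) \<and>
        (\<forall>m\<in>vehicles M. \<forall>t\<in>{1..<T}. load N mu m t a \<le> w))"

text \<open>First-fit seat allocation: for every profile, period and edge, the players
  on that edge (in some order P) are put, w at a time, into the vehicles on that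
  edge in increasing index order; players beyond the total capacity get no vehicle.\<close>
definition first_fit ::
  "nat \<Rightarrow> nat \<Rightarrow> nat \<Rightarrow> nat \<Rightarrow> (nat \<Rightarrow> 'v list set) \<Rightarrow> ('v profile \<Rightarrow> nat \<Rightarrow> 'v list)
   \<Rightarrow> (nat \<Rightarrow> nat \<Rightarrow> 'v profile \<Rightarrow> nat option) \<Rightarrow> bool" where
  "first_fit N M w T A vp mu \<longleftrightarrow>
     (\<forall>a. feasible N A a \<longrightarrow> (\<forall>t\<in>{1..<T}. \<forall>e.
        \<exists>P. distinct P \<and> set P = {k \<in> players N. edge_at (a k) t = e} \<and>
          (let Vs = sorted_list_of_set {m \<in> vehicles M. edge_at (vp a m) t = e} in
           \<forall>k<length P. mu (P ! k) t a =
              (if k div w < length Vs then Some (Vs ! (k div w)) else None))))"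

definition no_vehicle_loss ::
  "nat \<Rightarrow> nat \<Rightarrow> ('v profile \<Rightarrow> nat \<Rightarrow> 'v list) \<Rightarrow> 'v profile \<Rightarrow> 'v list \<Rightarrow> nat \<Rightarrow> bool" where
  "no_vehicle_loss M T vp a b i \<longleftrightarrow>
     (\<forall>t\<in>{1..<T}. num_vehicles_on M vp a (edge_at b t) t > 0 \<longrightarrow>
        num_vehicles_on M vp (a(i := b)) (edge_at b t) t \<noteq> 0)"

end

theory Submission
  imports Defs
begin

lemma mono_dec:
  assumes "\<forall>s. s < w \<longrightarrow> f (Suc s) \<le> (f s :: real)" "s1 \<le> s2" "s2 \<le> w"
  shows "f s2 \<le> f s1"
  using assms(2,3)
proof (induction s2 rule: dec_induct)
  case base then show ?case by simp
next
  case (step n)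
  then have "f (Suc n) \<le> f n" using assms(1) by simp
  with step show ?case by simp
qed

lemma key:
  assumes game: "ride_sharing_game N M w T V E A c vp mu"
    and H2: "N \<le> w"
    and H3: "first_fit N M w T A vp mu"
    and x: "feasible N A x"
    and t: "t \<in> {1..<T}" and k: "k \<in> players N"
  shows "seat_load N mu k t x =
     (if num_vehicles_on M vp x (edge_at (x k) t) t = 0 then 0
      else num_players_on N x (edge_at (x k) t) t)"
proof -
  define e where "e = edge_at (x k) t"
  have w0: "0 < w" using game by (simp add: ride_sharing_game_def)
  have gmu: "\<And>k' m. k' \<in> players N \<Longrightarrow> mu k' t x = Some m \<Longrightarrow>
      m \<in> vehicles M \<and> edge_at (vp x m) t = edge_at (x k') t"
    using game x t unfolding ride_sharing_game_def by blast
  obtain P where P: "distinct P" "set P = {k \<in> players N. edge_at (x k) t = e}"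
    and Pm: "\<forall>n<length P. mu (P ! n) t x =
        (if n div w < length (sorted_list_of_set {m \<in> vehicles M. edge_at (vp x m) t = e})
         then Some (sorted_list_of_set {m \<in> vehicles M. edge_at (vp x m) t = e} ! (n div w)) else None)"
    using H3 x t unfolding first_fit_def Let_def by blast
  define Vs where "Vs = sorted_list_of_set {m \<in> vehicles M. edge_at (vp x m) t = e}"
  have finV: "finite {m \<in> vehicles M. edge_at (vp x m) t = e}" by (simp add: vehicles_def)
  have setVs: "set Vs = {m \<in> vehicles M. edge_at (vp x m) t = e}"
    using finV by (simp add: Vs_def)
  have lenP: "length P \<le> N"
  proof -
    have "length P = card (set P)" using P(1) by (simp add: distinct_card)
    also have "\<dots> \<le> card (players N)" using P(2)
      by (intro card_mono) (auto simp: players_def)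
    finally show ?thesis by (simp add: players_def)
  qed
  have mu0: "\<And>k'. k' \<in> set P \<Longrightarrow> mu k' t x = (if Vs = [] then None else Some (Vs ! 0))"
  proof -
    fix k' assume "k' \<in> set P"
    then obtain n where n: "n < length P" "P ! n = k'" by (auto simp: in_set_conv_nth)
    have "n div w = 0" using n lenP H2 by simp
    then show "mu k' t x = (if Vs = [] then None else Some (Vs ! 0))"
      using Pm n unfolding Vs_def[symmetric] by auto
  qed
  have kP: "k \<in> set P" using P(2) k by (simp add: e_def)
  show ?thesis
  proof (cases "Vs = []")
    case True
    then have "{m \<in> vehicles M. edge_at (vp x m) t = e} = {}" using setVs by simp
    then have "num_vehicles_on M vp x e t = 0"
      unfolding num_vehicles_on_def by (metis card.empty)
    then show ?thesis using mu0[OF kP] True by (simp add: seat_load_def e_def[symmetric])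
  next
    case False
    then have "{m \<in> vehicles M. edge_at (vp x m) t = e} \<noteq> {}" using setVs by (metis set_empty)
    then have "num_vehicles_on M vp x e t \<noteq> 0"
      unfolding num_vehicles_on_def using finV by (metis card_0_eq)
    moreover have m0: "Vs ! 0 \<in> set Vs" using False by simp
    have "{k' \<in> players N. mu k' t x = Some (Vs ! 0)} = {k' \<in> players N. edge_at (x k') t = e}"
    proof (intro set_eqI iffI)
      fix k' assume a1: "k' \<in> {k' \<in> players N. mu k' t x = Some (Vs ! 0)}"
      then have "edge_at (vp x (Vs ! 0)) t = edge_at (x k') t" using gmu by blast
      moreover have "edge_at (vp x (Vs ! 0)) t = e" using m0 setVs by auto
      ultimately show "k' \<in> {k' \<in> players N. edge_at (x k') t = e}" using a1 by auto
    next
      fix k' assume "k' \<in> {k' \<in> players N. edge_at (x k') t = e}"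
      then show "k' \<in> {k' \<in> players N. mu k' t x = Some (Vs ! 0)}"
        using mu0 P(2) False by auto
    qed
    ultimately show ?thesis using mu0[OF kP] False
      by (simp add: seat_load_def load_def num_players_on_def e_def[symmetric])
  qed
qed

lemma seat_le:
  "seat_load N mu k t x \<le> N"
proof -
  have "\<And>m. card {k \<in> players N. mu k t x = Some m} \<le> card (players N)"
    by (intro card_mono) (auto simp: players_def)
  then show ?thesis by (auto simp: seat_load_def load_def players_def split: option.split)
qed

theorem lemma2:
  fixes N M w T :: nat and V :: "'v set" and E :: "('v \<times> 'v) set"
    and A :: "nat \<Rightarrow> 'v list set" and A0 :: "'v list set"
    and c :: "'v \<times> 'v \<Rightarrow> nat \<Rightarrow> nat \<Rightarrow> real"
    and vp :: "'v profile \<Rightarrow> nat \<Rightarrow> 'v list"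
    and mu :: "nat \<Rightarrow> nat \<Rightarrow> 'v profile \<Rightarrow> nat option"
    and a :: "'v profile" and i j :: nat
  assumes game: "ride_sharing_game N M w T V E A c vp mu"
    and H1: "\<forall>k\<in>players N. A k = A0"
    and H2: "N \<le> w"
    and H3: "first_fit N M w T A vp mu"
    and a: "feasible N A a"
    and i: "i \<in> players N" and j: "j \<in> players N"
    and H4: "no_vehicle_loss M T vp a (a j) i"
  shows "cost N T w c mu (a(i := a j)) i \<le> cost N T w c mu a j"
proof -
  define b where "b = a(i := a j)"
  have fb: "feasible N A b"
    using a H1 i j unfolding feasible_def b_def by auto
  have ajA: "a j \<in> A j" using a j by (simp add: feasible_def)
  have pj: "is_path V E T (a j)" using game ajA j by (auto simp: ride_sharing_game_def)
  have decr: "\<forall>e\<in>E. \<forall>s. s < w \<longrightarrow> c e w (Suc s) \<le> c e w s"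
    using game by (simp add: ride_sharing_game_def)
  show ?thesis unfolding cost_def b_def[symmetric]
  proof (rule sum_mono)
    fix t assume t: "t \<in> {1..<T}"
    define e where "e = edge_at (a j) t"
    have bi: "b i = a j" by (simp add: b_def)
    have eE: "e \<in> E" using pj t by (simp add: is_path_def e_def)
    have sub: "{k \<in> players N. edge_at (a k) t = e} \<subseteq> {k \<in> players N. edge_at (b k) t = e}"
      by (auto simp: b_def e_def)
    have NN: "num_players_on N a e t \<le> num_players_on N b e t"
      unfolding num_players_on_def by (intro card_mono[OF _ sub]) (auto simp: players_def)
    have Kb: "seat_load N mu i t b = (if num_vehicles_on M vp b e t = 0 then 0
      else num_players_on N b e t)"
      using key[OF game H2 H3 fb t i] bi by (simp add: e_def)
    have Ka: "seat_load N mu j t a = (if num_vehicles_on M vp a e t = 0 then 0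
      else num_players_on N a e t)"
      using key[OF game H2 H3 a t j] by (simp add: e_def)
    have nvl: "num_vehicles_on M vp a e t > 0 \<Longrightarrow> num_vehicles_on M vp b e t \<noteq> 0"
      using H4 t by (simp add: no_vehicle_loss_def b_def e_def)
    have le: "seat_load N mu j t a \<le> seat_load N mu i t b"
      using Ka Kb NN nvl by auto
    have lw: "seat_load N mu i t b \<le> w" using seat_le[of N mu i t b] H2 by simp
    have "c e w (seat_load N mu i t b) \<le> c e w (seat_load N mu j t a)"
      using mono_dec[of w "c e w", OF _ le lw] decr eE by blast
    then show "c (edge_at (b i) t) w (seat_load N mu i t b) \<le> c (edge_at (a j) t) w (seat_load N mu j t a)"
      using bi e_def by simp
  qed
qed

end
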